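(* Fix $\alpha_1,\alpha_2>0$ and, for a variable $n>0$, let $T=\alpha_1\log n$ and $L=\alpha_2\log n$. Use either lower or upper boundary values. Then for every $\kappa>0$ there are $\alpha_3>0$ and $n_0$ such that, with $K=\alpha_3\log n$ (rounded to an integer), for every solution $\mathbf u(t)$ of the mean-field equations with $\mathbf u(0)\in[0,1]^{\mathbb Z}$ and its $K$-restriction ${}^K\mathbf u$ with ${}^Ku_x(0)=u_x(0)$ for $|x|\le K$, $$|{}^Ku_x(t)-u_x(t)|\le n^{-\kappa}\quad\text{for all }n\ge n_0,\ |x|\le L,\ t\in[0,T].$$
   Context: Fix $a,b>0$ and $M\ge1$; for $x,y\in\mathbb Z$ write $y\sim x$ iff $0<|x-y|\le M$. Mean-field equations: $u_x'=(a u_x^2+\frac{b}{2M}\sum_{y\sim x}u_y^2)(1-u_x)-u_x$, $x\in\mathbb Z$. For an integer $K\ge1$ and boundary values $\beta\in\{0,1\}$, the $K$-restriction ${}^K\mathbf u(t)=({}^Ku_x(t))_{|x|\le K}$ is the solution of the finite system ${}^Ku_x'=(a\,{}^Ku_x^2+\frac{b}{2M}\sum_{y\sim x}\tilde u_y^2)(1-{}^Ku_x)-{}^Ku_x$ for $|x|\le K$, where $\tilde u_y={}^Ku_y$ if $|y|\le K$ and $\tilde u_y=\beta$ if $|y|>K$. $\beta=0$ is called lower boundary values, $\beta=1$ upper boundary values. *)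

theory Defs
  imports "HOL-Analysis.Analysis"
begin

definition nbr :: "nat \<Rightarrow> int \<Rightarrow> int set" where
  "nbr M x = {y. 0 < \<bar>x - y\<bar> \<and> \<bar>x - y\<bar> \<le> int M}"

definition mf_rhs :: "real \<Rightarrow> real \<Rightarrow> nat \<Rightarrow> (int \<Rightarrow> real) \<Rightarrow> int \<Rightarrow> real" where
  "mf_rhs a b M v x =
     (a * (v x)^2 + b / (2 * real M) * (\<Sum>y\<in>nbr M x. (v y)^2)) * (1 - v x) - v x"

definition mf_solution :: "real \<Rightarrow> real \<Rightarrow> nat \<Rightarrow> (real \<Rightarrow> int \<Rightarrow> real) \<Rightarrow> bool" where
  "mf_solution a b M u \<longleftrightarrow>
     (\<forall>x. \<forall>t\<ge>0. ((\<lambda>s. u s x) has_real_derivative mf_rhs a b M (u t) x) (at t within {0..}))"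

definition bext :: "int \<Rightarrow> real \<Rightarrow> (int \<Rightarrow> real) \<Rightarrow> int \<Rightarrow> real" where
  "bext K \<beta> v = (\<lambda>y. if \<bar>y\<bar> \<le> K then v y else \<beta>)"

text \<open>A solution of the K-restricted system with boundary values \<beta>, for t \<ge> 0
  (only the coordinates |x| \<le> K are constrained / meaningful).\<close>
definition restr_solution ::
  "real \<Rightarrow> real \<Rightarrow> nat \<Rightarrow> int \<Rightarrow> real \<Rightarrow> (real \<Rightarrow> int \<Rightarrow> real) \<Rightarrow> bool" where
  "restr_solution a b M K \<beta> ku \<longleftrightarrow>
     (\<forall>x. \<bar>x\<bar> \<le> K \<longrightarrow> (\<forall>t\<ge>0.
        ((\<lambda>s. ku s x) has_real_derivative mf_rhs a b M (bext K \<beta> (ku t)) x) (at t within {0..})))"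

end

theory Submission
  imports Defs
begin
lemma deriv_pos_at:
  assumes "(f has_real_derivative D) (at t within {0..})" "t > 0"
  shows "(f has_real_derivative D) (at t)"
proof -
  have "t \<in> interior {0..}" using assms(2) by simp
  hence "at t within {0..} = at t" by (rule at_within_interior)
  thus ?thesis using assms(1) by simp
qed
lemma deriv_cont:
  assumes "\<forall>t\<ge>0. (f has_real_derivative D t) (at t within {0..})"
  shows "continuous_on {0..} f"
  unfolding continuous_on_eq_continuous_within
proof
  fix t :: real assume "t \<in> {0..}"
  hence "(f has_real_derivative D t) (at t within {0..})" using assms by simp
  thus "continuous (at t within {0..}) f" by (rule DERIV_continuous)
qed

lemma inv_upper:
  fixes \<phi> S :: "real \<Rightarrow> real"
  assumes a: "a \<ge> 0" and i: "\<phi> 0 \<le> 1"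
   and d: "\<forall>t\<ge>0. (\<phi> has_real_derivative ((a*(\<phi> t)^2 + S t)*(1 - \<phi> t) - \<phi> t)) (at t within {0..})"
   and S: "\<forall>t. S t \<ge> 0" and t1: "t1 \<ge> 0"
  shows "\<phi> t1 \<le> 1"
proof (rule ccontr)
  assume c: "\<not> \<phi> t1 \<le> 1"
  have ct: "continuous_on {0..} \<phi>" using deriv_cont[OF d] .
  have ct1: "continuous_on {0..t1} \<phi>" by (rule continuous_on_subset[OF ct]) auto
  let ?Z = "{s\<in>{0..t1}. \<phi> s \<le> (\<lambda>_. 1) s}"
  have cl: "closed ?Z" by (rule continuous_on_closed_Collect_le[OF ct1]) (simp_all add: continuous_on_const)
  have "?Z = {0..t1} \<inter> ?Z" by auto
  hence "compact ?Z" using cl compact_Int_closed[of "{0..t1}" ?Z] by simp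
  moreover have "0 \<in> ?Z" using i t1 by auto
  ultimately obtain s where s: "s \<in> ?Z" and smax: "\<forall>r\<in>?Z. r \<le> s"
    using compact_attains_sup[of ?Z] by blast
  have st: "s \<le> t1" "s \<ge> 0" using s by auto
  have cs: "continuous_on {s..t1} \<phi>" by (rule continuous_on_subset[OF ct1]) (use st in auto)
  obtain x where x: "s \<le> x" "x \<le> t1" "\<phi> x = 1"
    using IVT'[of \<phi> s 1 t1, OF _ _ st(1) cs] s c by auto
  have "x \<in> ?Z" using x st by auto
  hence "x \<le> s" using smax by blast
  hence "x = s" using x(1) by linarith
  hence ps: "\<phi> s = 1" using x by simp
  have "\<phi> s \<ge> \<phi> t1"
  proof (rule DERIV_nonpos_imp_decreasing_open[OF st(1) _ cs])
    fix r assume r: "s < r" "r < t1"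
    have "r \<notin> ?Z"
    proof
      assume "r \<in> ?Z" hence "r \<le> s" using smax by blast
      thus False using r by simp
    qed
    hence pr: "\<phi> r > 1" using r st by auto
    have "(a*(\<phi> r)^2 + S r) \<ge> 0" using a S by (simp add: add_nonneg_nonneg)
    hence "(a*(\<phi> r)^2 + S r)*(1 - \<phi> r) \<le> 0" using pr by (simp add: mult_nonneg_nonpos)
    hence "(a*(\<phi> r)^2 + S r)*(1 - \<phi> r) - \<phi> r \<le> 0" using pr by linarith
    moreover have "(\<phi> has_real_derivative ((a*(\<phi> r)^2 + S r)*(1 - \<phi> r) - \<phi> r)) (at r)"
      using deriv_pos_at[of \<phi> _ r] d r st by simp
    ultimately show "\<exists>y. DERIV \<phi> r :> y \<and> y \<le> 0" by blast
  qed
  thus False using ps c by simp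
qed

lemma inv_lower:
  fixes \<phi> S :: "real \<Rightarrow> real"
  assumes a: "a \<ge> 0" and i: "\<phi> 0 \<ge> 0"
   and d: "\<forall>t\<ge>0. (\<phi> has_real_derivative ((a*(\<phi> t)^2 + S t)*(1 - \<phi> t) - \<phi> t)) (at t within {0..})"
   and S: "\<forall>t. S t \<ge> 0" and t1: "t1 \<ge> 0"
  shows "\<phi> t1 \<ge> 0"
proof (rule ccontr)
  assume c: "\<not> \<phi> t1 \<ge> 0"
  have ct: "continuous_on {0..} \<phi>" using deriv_cont[OF d] .
  have ct1: "continuous_on {0..t1} \<phi>" by (rule continuous_on_subset[OF ct]) auto
  let ?Z = "{s\<in>{0..t1}. (\<lambda>_. 0) s \<le> \<phi> s}"
  have cl: "closed ?Z" by (rule continuous_on_closed_Collect_le[OF _ ct1]) (simp_all add: continuous_on_const)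
  have "?Z = {0..t1} \<inter> ?Z" by auto
  hence "compact ?Z" using cl compact_Int_closed[of "{0..t1}" ?Z] by simp
  moreover have "0 \<in> ?Z" using i t1 by auto
  ultimately obtain s where s: "s \<in> ?Z" and smax: "\<forall>r\<in>?Z. r \<le> s"
    using compact_attains_sup[of ?Z] by blast
  have st: "s \<le> t1" "s \<ge> 0" using s by auto
  have cs: "continuous_on {s..t1} \<phi>" by (rule continuous_on_subset[OF ct1]) (use st in auto)
  have cs': "continuous_on {s..t1} (\<lambda>r. - \<phi> r)" using cs by (intro continuous_intros)
  obtain x where x: "s \<le> x" "x \<le> t1" "- \<phi> x = 0"
    using IVT'[of "\<lambda>r. - \<phi> r" s 0 t1, OF _ _ st(1) cs'] s c by auto
  have "x \<in> ?Z" using x st by auto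
  hence "x \<le> s" using smax by blast
  hence "x = s" using x(1) by linarith
  hence ps: "\<phi> s = 0" using x by simp
  have "\<phi> s \<le> \<phi> t1"
  proof (rule DERIV_nonneg_imp_increasing_open[OF st(1) _ cs])
    fix r assume r: "s < r" "r < t1"
    have "r \<notin> ?Z"
    proof
      assume "r \<in> ?Z" hence "r \<le> s" using smax by blast
      thus False using r by simp
    qed
    hence pr: "\<phi> r < 0" using r st by auto
    have "(a*(\<phi> r)^2 + S r) \<ge> 0" using a S by (simp add: add_nonneg_nonneg)
    hence "(a*(\<phi> r)^2 + S r)*(1 - \<phi> r) \<ge> 0" using pr by simp
    hence "(a*(\<phi> r)^2 + S r)*(1 - \<phi> r) - \<phi> r \<ge> 0" using pr by linarith
    moreover have "(\<phi> has_real_derivative ((a*(\<phi> r)^2 + S r)*(1 - \<phi> r) - \<phi> r)) (at r)"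
      using deriv_pos_at[of \<phi> _ r] d r st by simp
    ultimately show "\<exists>y. DERIV \<phi> r :> y \<and> y \<ge> 0" by blast
  qed
  thus False using ps c by simp
qed

lemma nbr_eq: "nbr M x = {x - int M .. x + int M} - {x}"
  unfolding nbr_def by auto

lemma nbr_finite: "finite (nbr M x)"
  unfolding nbr_eq by simp

lemma nbr_card: "card (nbr M x) = 2 * M"
proof -
  have "card {x - int M .. x + int M} = 2*M + 1" by simp
  thus ?thesis unfolding nbr_eq by (simp add: card_Diff_singleton)
qed

lemma nbr_abs: "y \<in> nbr M x \<Longrightarrow> \<bar>y\<bar> \<le> \<bar>x\<bar> + int M"
  unfolding nbr_def by auto

lemma sq_diff_le: "0 \<le> p \<Longrightarrow> p \<le> 1 \<Longrightarrow> 0 \<le> q \<Longrightarrow> q \<le> 1 \<Longrightarrow> \<bar>p^2 - q^2\<bar> \<le> 2 * \<bar>p - q\<bar>"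
  for p q :: real
proof -
  assume h: "0 \<le> p" "p \<le> 1" "0 \<le> q" "q \<le> 1"
  have "p^2 - q^2 = (p - q) * (p + q)" by (simp add: power2_eq_square algebra_simps)
  hence "\<bar>p^2 - q^2\<bar> = \<bar>p - q\<bar> * (p + q)" using h by (simp add: abs_mult)
  also have "\<dots> \<le> \<bar>p - q\<bar> * 2" using h by (intro mult_left_mono) auto
  finally show ?thesis by simp
qed

lemma lip:
  fixes v w :: "int \<Rightarrow> real" and a b :: real
  assumes a: "a \<ge> 0" and b: "b \<ge> 0" and M: "M \<ge> 1"
    and v: "\<forall>y\<in>insert x (nbr M x). 0 \<le> v y \<and> v y \<le> 1"
    and w: "\<forall>y\<in>insert x (nbr M x). 0 \<le> w y \<and> w y \<le> 1"
  shows "\<bar>mf_rhs a b M v x - mf_rhs a b M w x\<bar>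
     \<le> (3*a+b+1)*\<bar>v x - w x\<bar> + b / real M * (\<Sum>y\<in>nbr M x. \<bar>v y - w y\<bar>)"
proof -
  define c where "c = b / (2 * real M)"
  define Sv where "Sv = (\<Sum>y\<in>nbr M x. (v y)^2)"
  define Sw where "Sw = (\<Sum>y\<in>nbr M x. (w y)^2)"
  define \<Sigma> where "\<Sigma> = (\<Sum>y\<in>nbr M x. \<bar>v y - w y\<bar>)"
  define Pv where "Pv = a * (v x)^2 + c * Sv"
  define Pw where "Pw = a * (w x)^2 + c * Sw"
  have Mpos: "real M > 0" using M by simp
  have c0: "c \<ge> 0" unfolding c_def using b Mpos by simp
  have c2: "2 * c = b / real M" unfolding c_def using Mpos by simp
  have vx: "0 \<le> v x" "v x \<le> 1" and wx: "0 \<le> w x" "w x \<le> 1" using v w by auto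
  have "\<bar>Sv - Sw\<bar> = \<bar>\<Sum>y\<in>nbr M x. (v y)^2 - (w y)^2\<bar>"
    unfolding Sv_def Sw_def by (simp add: sum_subtractf)
  also have "\<dots> \<le> (\<Sum>y\<in>nbr M x. \<bar>(v y)^2 - (w y)^2\<bar>)" by (rule sum_abs)
  also have "\<dots> \<le> (\<Sum>y\<in>nbr M x. 2 * \<bar>v y - w y\<bar>)"
    by (rule sum_mono) (use v w in \<open>auto intro: sq_diff_le\<close>)
  finally have hS: "\<bar>Sv - Sw\<bar> \<le> 2 * \<Sigma>" unfolding \<Sigma>_def by (simp add: sum_distrib_left)
  have "Sw \<le> (\<Sum>y\<in>nbr M x. 1)" unfolding Sw_def
    by (rule sum_mono) (use w in \<open>auto simp: power_le_one\<close>)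
  hence Sw1: "Sw \<le> 2 * real M" using nbr_card[of M x] by simp
  have Sw0: "Sw \<ge> 0" unfolding Sw_def by (simp add: sum_nonneg)
  have "c * Sw \<le> c * (2 * real M)" using Sw1 c0 by (rule mult_left_mono)
  hence "c * Sw \<le> b" unfolding c_def using Mpos by simp
  moreover have "a * (w x)^2 \<le> a" using a wx by (simp add: mult_left_le power_le_one)
  ultimately have Pw1: "Pw \<le> a + b" unfolding Pw_def by simp
  have Pw0: "Pw \<ge> 0" unfolding Pw_def using a c0 Sw0 by simp
  have "\<bar>Pv - Pw\<bar> = \<bar>a * ((v x)^2 - (w x)^2) + c * (Sv - Sw)\<bar>"
    unfolding Pv_def Pw_def by (simp add: algebra_simps)
  also have "\<dots> \<le> a * \<bar>(v x)^2 - (w x)^2\<bar> + c * \<bar>Sv - Sw\<bar>"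
    using a c0 by (simp add: abs_mult abs_triangle_ineq[THEN order_trans])
  also have "\<dots> \<le> a * (2 * \<bar>v x - w x\<bar>) + c * (2 * \<Sigma>)"
    using a c0 hS sq_diff_le[OF vx wx] by (intro add_mono mult_left_mono) auto
  finally have hP: "\<bar>Pv - Pw\<bar> \<le> 2 * a * \<bar>v x - w x\<bar> + b / real M * \<Sigma>"
    using c2 by (simp add: algebra_simps)
  have eq: "mf_rhs a b M v x - mf_rhs a b M w x = (Pv - Pw) * (1 - v x) + (Pw + 1) * (w x - v x)"
    unfolding mf_rhs_def Pv_def Pw_def Sv_def Sw_def c_def[symmetric] by (simp add: algebra_simps)
  have t1: "\<bar>(Pv - Pw) * (1 - v x)\<bar> \<le> \<bar>Pv - Pw\<bar>"
    using vx by (simp add: abs_mult mult_left_le)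
  have t2: "\<bar>(Pw + 1) * (w x - v x)\<bar> \<le> (a + b + 1) * \<bar>v x - w x\<bar>"
    using Pw0 Pw1 by (simp add: abs_mult abs_minus_commute mult_right_mono)
  have "\<bar>mf_rhs a b M v x - mf_rhs a b M w x\<bar> \<le> \<bar>(Pv - Pw) * (1 - v x)\<bar> + \<bar>(Pw + 1) * (w x - v x)\<bar>"
    unfolding eq by (rule abs_triangle_ineq)
  also have "\<dots> \<le> (2 * a * \<bar>v x - w x\<bar> + b / real M * \<Sigma>) + (a + b + 1) * \<bar>v x - w x\<bar>"
    using t1 t2 hP by linarith
  finally show ?thesis unfolding \<Sigma>_def by (simp add: algebra_simps)
qed

lemma u_bounds:
  assumes a: "a > 0" and b: "b > 0" and sol: "mf_solution a b M u"
    and i: "\<forall>x. 0 \<le> u 0 x \<and> u 0 x \<le> 1" and t: "t \<ge> 0"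
  shows "0 \<le> u t x \<and> u t x \<le> 1"
proof -
  define S where "S = (\<lambda>s. b / (2 * real M) * (\<Sum>y\<in>nbr M x. (u s y)^2))"
  have S0: "\<forall>s. S s \<ge> 0" unfolding S_def using b by (simp add: sum_nonneg)
  have d: "\<forall>s\<ge>0. ((\<lambda>s. u s x) has_real_derivative ((a*(u s x)^2 + S s)*(1 - u s x) - u s x)) (at s within {0..})"
  proof (intro allI impI)
    fix s :: real assume s: "s \<ge> 0"
    have "((\<lambda>s. u s x) has_real_derivative mf_rhs a b M (u s) x) (at s within {0..})"
      using sol s unfolding mf_solution_def by blast
    moreover have "mf_rhs a b M (u s) x = (a*(u s x)^2 + S s)*(1 - u s x) - u s x"
      unfolding mf_rhs_def S_def by simp
    ultimately show "((\<lambda>s. u s x) has_real_derivative ((a*(u s x)^2 + S s)*(1 - u s x) - u s x)) (at s within {0..})"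
      by simp
  qed
  have a0: "a \<ge> 0" using a by simp
  have "u t x \<le> 1" using inv_upper[of a "\<lambda>s. u s x" S t, OF a0 _ d S0 t] i by simp
  moreover have "u t x \<ge> 0" using inv_lower[of a "\<lambda>s. u s x" S t, OF a0 _ d S0 t] i by simp
  ultimately show ?thesis by simp
qed

lemma ku_bounds:
  assumes a: "a > 0" and b: "b > 0" and sol: "restr_solution a b M K \<beta> ku"
    and i: "\<forall>x. \<bar>x\<bar> \<le> K \<longrightarrow> 0 \<le> ku 0 x \<and> ku 0 x \<le> 1" and t: "t \<ge> 0" and x: "\<bar>x\<bar> \<le> K"
  shows "0 \<le> ku t x \<and> ku t x \<le> 1"
proof -
  define S where "S = (\<lambda>s. b / (2 * real M) * (\<Sum>y\<in>nbr M x. (bext K \<beta> (ku s) y)^2))"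
  have S0: "\<forall>s. S s \<ge> 0" unfolding S_def using b by (simp add: sum_nonneg)
  have bx: "\<And>s. bext K \<beta> (ku s) x = ku s x" using x by (simp add: bext_def)
  have d: "\<forall>s\<ge>0. ((\<lambda>s. ku s x) has_real_derivative ((a*(ku s x)^2 + S s)*(1 - ku s x) - ku s x)) (at s within {0..})"
  proof (intro allI impI)
    fix s :: real assume s: "s \<ge> 0"
    have "((\<lambda>s. ku s x) has_real_derivative mf_rhs a b M (bext K \<beta> (ku s)) x) (at s within {0..})"
      using sol s x unfolding restr_solution_def by blast
    moreover have "mf_rhs a b M (bext K \<beta> (ku s)) x = (a*(ku s x)^2 + S s)*(1 - ku s x) - ku s x"
      unfolding mf_rhs_def S_def bx by simp
    ultimately show "((\<lambda>s. ku s x) has_real_derivative ((a*(ku s x)^2 + S s)*(1 - ku s x) - ku s x)) (at s within {0..})"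
      by simp
  qed
  have a0: "a \<ge> 0" using a by simp
  have "ku t x \<le> 1" using inv_upper[of a "\<lambda>s. ku s x" S t, OF a0 _ d S0 t] i x by simp
  moreover have "ku t x \<ge> 0" using inv_lower[of a "\<lambda>s. ku s x" S t, OF a0 _ d S0 t] i x by simp
  ultimately show ?thesis by simp
qed


lemma compare:
  fixes u ku :: "real \<Rightarrow> int \<Rightarrow> real" and K :: int and a b C \<beta> :: real
  assumes a: "a > 0" and b: "b > 0" and M: "M \<ge> 1" and \<beta>: "\<beta> \<in> {0,1}"
    and sol: "mf_solution a b M u" and i: "\<forall>x. 0 \<le> u 0 x \<and> u 0 x \<le> 1"
    and ksol: "restr_solution a b M K \<beta> ku" and ki: "\<forall>x. \<bar>x\<bar> \<le> K \<longrightarrow> ku 0 x = u 0 x"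
    and C: "C = 3*a + b + 1 + 2*b*exp (real M) + 1"
  shows "\<forall>t\<ge>0. \<forall>x. \<bar>x\<bar> \<le> K \<longrightarrow> \<bar>ku t x - u t x\<bar> < exp (C*t - real_of_int (K + 1 - \<bar>x\<bar>))"
proof (rule ccontr)
  define h where "h = (\<lambda>x t. exp (C*t - real_of_int (K + 1 - \<bar>x\<bar>)))"
  define g where "g = (\<lambda>x t. ku t x - u t x)"
  define B where "B = {x::int. \<bar>x\<bar> \<le> K}"
  have Bfin: "finite B" proof -
    have "B \<subseteq> {-K..K}" unfolding B_def by auto
    thus ?thesis by (rule finite_subset) simp
  qed
  have C0: "C > 0" using C a b by (simp add: add_pos_nonneg)
  have hpos: "\<And>x t. h x t > 0" unfolding h_def by simp
  have ub: "\<And>t y. t \<ge> 0 \<Longrightarrow> 0 \<le> u t y \<and> u t y \<le> 1" using u_bounds[OF a b sol i] by blast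
  have ki': "\<forall>x. \<bar>x\<bar> \<le> K \<longrightarrow> 0 \<le> ku 0 x \<and> ku 0 x \<le> 1" using ki i by simp
  have kb: "\<And>t y. t \<ge> 0 \<Longrightarrow> \<bar>y\<bar> \<le> K \<Longrightarrow> 0 \<le> ku t y \<and> ku t y \<le> 1"
    using ku_bounds[OF a b ksol ki'] by blast
  have bb: "\<And>t y. t \<ge> 0 \<Longrightarrow> 0 \<le> bext K \<beta> (ku t) y \<and> bext K \<beta> (ku t) y \<le> 1"
    using kb \<beta> by (auto simp: bext_def)
  define Dg where "Dg = (\<lambda>x t. mf_rhs a b M (bext K \<beta> (ku t)) x - mf_rhs a b M (u t) x)"
  have dg: "\<And>x t. x \<in> B \<Longrightarrow> t \<ge> 0 \<Longrightarrow> (g x has_real_derivative Dg x t) (at t within {0..})"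
  proof -
    fix x t assume x: "x \<in> B" and t: "(t::real) \<ge> 0"
    have 1: "((\<lambda>s. ku s x) has_real_derivative mf_rhs a b M (bext K \<beta> (ku t)) x) (at t within {0..})"
      using ksol x t unfolding restr_solution_def B_def by blast
    have 2: "((\<lambda>s. u s x) has_real_derivative mf_rhs a b M (u t) x) (at t within {0..})"
      using sol t unfolding mf_solution_def by blast
    show "(g x has_real_derivative Dg x t) (at t within {0..})"
      unfolding g_def Dg_def by (rule DERIV_diff[OF 1 2])
  qed
  have dh: "\<And>x t. (h x has_real_derivative C * h x t) (at t)"
  proof -
    fix x t
    show "(h x has_real_derivative C * h x t) (at t)"
      unfolding h_def by (auto intro!: derivative_eq_intros)
  qed
  have gc: "\<And>x. x \<in> B \<Longrightarrow> continuous_on {0..} (g x)"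
    using deriv_cont dg by blast
  have hc: "\<And>x S. continuous_on S (h x)"
    unfolding h_def by (intro continuous_intros)
  have agc: "\<And>x S. x \<in> B \<Longrightarrow> S \<subseteq> {0..} \<Longrightarrow> continuous_on S (\<lambda>t. \<bar>g x t\<bar>)"
    by (intro continuous_intros) (auto intro: continuous_on_subset gc)
  assume "\<not> ?thesis"
  then obtain t1 x0 where t1: "t1 \<ge> 0" and x0: "x0 \<in> B" and f0: "h x0 t1 \<le> \<bar>g x0 t1\<bar>"
    unfolding h_def g_def B_def by force
  define S where "S = (\<Union>x\<in>B. {t\<in>{0..t1}. h x t \<le> \<bar>g x t\<bar>})"
  have "closed S" unfolding S_def
  proof (rule closed_UN[OF Bfin], rule ballI)
    fix x assume "x \<in> B"
    thus "closed {t\<in>{0..t1}. h x t \<le> \<bar>g x t\<bar>}"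
      by (intro continuous_on_closed_Collect_le hc agc) auto
  qed
  moreover have "S \<subseteq> {0..t1}" unfolding S_def by auto
  ultimately have "compact S" using compact_Int_closed[of "{0..t1}" S] by (simp add: Int_absorb1)
  moreover have "t1 \<in> S" unfolding S_def using t1 x0 f0 by auto
  ultimately obtain ts where ts: "ts \<in> S" and tsmin: "\<forall>t\<in>S. ts \<le> t"
    using compact_attains_inf[of S] by blast
  have ts0: "ts \<ge> 0" "ts \<le> t1" using ts unfolding S_def by auto
  have before: "\<And>y t. y \<in> B \<Longrightarrow> 0 \<le> t \<Longrightarrow> t < ts \<Longrightarrow> \<bar>g y t\<bar> < h y t"
  proof (rule ccontr)
    fix y t assume y: "y \<in> B" and t: "0 \<le> t" "t < ts" and n: "\<not> \<bar>g y t\<bar> < h y t"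
    hence "h y t \<le> \<bar>g y t\<bar>" by simp
    hence "t \<in> S" unfolding S_def using ts0 t y by auto
    thus False using tsmin t by force
  qed
  have g0: "\<And>y. y \<in> B \<Longrightarrow> g y 0 = 0" unfolding g_def B_def using ki by simp
  have tspos: "ts > 0"
  proof (rule ccontr)
    assume "\<not> ts > 0" hence "ts = 0" using ts0 by simp
    then obtain y where "y \<in> B" "h y 0 \<le> \<bar>g y 0\<bar>" using ts unfolding S_def by auto
    thus False using g0 hpos[of y 0] by simp
  qed
  have atts: "\<And>y. y \<in> B \<Longrightarrow> \<bar>g y ts\<bar> \<le> h y ts"
  proof -
    fix y assume y: "y \<in> B"
    have cl: "closed {t\<in>{0..ts}. \<bar>g y t\<bar> \<le> h y t}"
      by (intro continuous_on_closed_Collect_le hc agc y) auto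
    have "{0..<ts} \<subseteq> {t\<in>{0..ts}. \<bar>g y t\<bar> \<le> h y t}"
      using before[OF y] by (auto simp: less_imp_le)
    hence "closure {0..<ts} \<subseteq> {t\<in>{0..ts}. \<bar>g y t\<bar> \<le> h y t}"
      using cl by (rule closure_minimal)
    moreover have "ts \<in> closure {0..<ts}" using tspos by simp
    ultimately have "ts \<in> {t\<in>{0..ts}. \<bar>g y t\<bar> \<le> h y t}" by (rule subsetD)
    thus "\<bar>g y ts\<bar> \<le> h y ts" by simp
  qed
  obtain x where x: "x \<in> B" and fx: "h x ts \<le> \<bar>g x ts\<bar>" using ts unfolding S_def by auto
  have eqx: "\<bar>g x ts\<bar> = h x ts" using fx atts[OF x] by simp
  have nb: "\<And>y. y \<in> nbr M x \<Longrightarrow> \<bar>bext K \<beta> (ku ts) y - u ts y\<bar> \<le> exp (real M) * h x ts"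
  proof -
    fix y assume y: "y \<in> nbr M x"
    have yx: "\<bar>y\<bar> \<le> \<bar>x\<bar> + int M" using nbr_abs[OF y] .
    have e: "exp (real M) * h x ts = exp (C*ts - real_of_int (K + 1 - \<bar>x\<bar>) + real M)"
      unfolding h_def by (simp add: exp_add)
    show "\<bar>bext K \<beta> (ku ts) y - u ts y\<bar> \<le> exp (real M) * h x ts"
    proof (cases "\<bar>y\<bar> \<le> K")
      case True
      hence "\<bar>bext K \<beta> (ku ts) y - u ts y\<bar> = \<bar>g y ts\<bar>" unfolding bext_def g_def by simp
      also have "\<dots> \<le> h y ts" using atts True unfolding B_def by simp
      also have "\<dots> \<le> exp (C*ts - real_of_int (K + 1 - \<bar>x\<bar>) + real M)"
      proof -
        have "real_of_int \<bar>y\<bar> \<le> real_of_int \<bar>x\<bar> + real M" using yx by linarith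
        thus ?thesis unfolding h_def by simp
      qed
      finally show ?thesis unfolding e .
    next
      case False
      have "\<bar>bext K \<beta> (ku ts) y - u ts y\<bar> \<le> 1" using bb[OF ts0(1), of y] ub[OF ts0(1), of y] by linarith
      also have "1 \<le> exp (C*ts - real_of_int (K + 1 - \<bar>x\<bar>) + real M)"
      proof -
        have "real_of_int (K + 1 - \<bar>x\<bar>) \<le> real M" using False yx by linarith
        moreover have "C * ts \<ge> 0" using C0 ts0 by simp
        ultimately show ?thesis by simp
      qed
      finally show ?thesis unfolding e .
    qed
  qed
  have "(\<Sum>y\<in>nbr M x. \<bar>bext K \<beta> (ku ts) y - u ts y\<bar>) \<le> (\<Sum>y\<in>nbr M x. exp (real M) * h x ts)"
    by (rule sum_mono) (rule nb)
  also have "\<dots> = 2 * real M * exp (real M) * h x ts" using nbr_card[of M x] by simp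
  finally have sumb: "(\<Sum>y\<in>nbr M x. \<bar>bext K \<beta> (ku ts) y - u ts y\<bar>) \<le> 2 * real M * exp (real M) * h x ts" .
  have vin: "\<forall>y\<in>insert x (nbr M x). 0 \<le> bext K \<beta> (ku ts) y \<and> bext K \<beta> (ku ts) y \<le> 1"
    using bb[OF ts0(1)] by blast
  have win: "\<forall>y\<in>insert x (nbr M x). 0 \<le> u ts y \<and> u ts y \<le> 1"
    using ub[OF ts0(1)] by blast
  have bxx: "bext K \<beta> (ku ts) x = ku ts x" using x unfolding B_def bext_def by simp
  have "\<bar>Dg x ts\<bar> \<le> (3*a+b+1)*\<bar>g x ts\<bar> + b / real M * (\<Sum>y\<in>nbr M x. \<bar>bext K \<beta> (ku ts) y - u ts y\<bar>)"
    using lip[OF _ _ M vin win] a b unfolding Dg_def g_def bxx by simp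
  also have "\<dots> \<le> (3*a+b+1)*h x ts + b / real M * (2 * real M * exp (real M) * h x ts)"
    using eqx sumb a b by (intro add_mono mult_left_mono) auto
  also have "\<dots> = (3*a+b+1 + 2*b*exp (real M)) * h x ts" using M by (simp add: algebra_simps)
  also have "\<dots> < C * h x ts" using C hpos[of x ts] by (simp add: algebra_simps)
  finally have Dlt: "\<bar>Dg x ts\<bar> < C * h x ts" .
  have dga: "(g x has_real_derivative Dg x ts) (at ts)" using deriv_pos_at dg[OF x ts0(1)] tspos by blast
  show False
  proof (cases "g x ts \<ge> 0")
    case True
    define \<psi> where "\<psi> = (\<lambda>s. g x s - h x s)"
    have "(\<psi> has_real_derivative Dg x ts - C * h x ts) (at ts)"
      unfolding \<psi>_def by (rule DERIV_diff[OF dga dh])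
    moreover have "Dg x ts - C * h x ts < 0" using Dlt by linarith
    ultimately obtain d where d: "d > 0" "\<forall>e>0. e < d \<longrightarrow> \<psi> ts < \<psi> (ts - e)"
      using DERIV_neg_dec_left by blast
    define e where "e = min d ts / 2"
    have e: "e > 0" "e < d" "e < ts" unfolding e_def using d tspos by auto
    have "\<psi> ts < \<psi> (ts - e)" using d e by blast
    moreover have "\<psi> ts = 0" unfolding \<psi>_def using eqx True by simp
    moreover have "\<bar>g x (ts - e)\<bar> < h x (ts - e)" using before[OF x] e by simp
    ultimately show False unfolding \<psi>_def by linarith
  next
    case False
    define \<psi> where "\<psi> = (\<lambda>s. - g x s - h x s)"
    have "(\<psi> has_real_derivative - Dg x ts - C * h x ts) (at ts)"
      unfolding \<psi>_def by (rule DERIV_diff[OF DERIV_minus[OF dga] dh])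
    moreover have "- Dg x ts - C * h x ts < 0" using Dlt by linarith
    ultimately obtain d where d: "d > 0" "\<forall>e>0. e < d \<longrightarrow> \<psi> ts < \<psi> (ts - e)"
      using DERIV_neg_dec_left by blast
    define e where "e = min d ts / 2"
    have e: "e > 0" "e < d" "e < ts" unfolding e_def using d tspos by auto
    have "\<psi> ts < \<psi> (ts - e)" using d e by blast
    moreover have "\<psi> ts = 0" unfolding \<psi>_def using eqx False by simp
    moreover have "\<bar>g x (ts - e)\<bar> < h x (ts - e)" using before[OF x] e by simp
    ultimately show False unfolding \<psi>_def by linarith
  qed
qed


theorem lemma4p7:
  fixes a b :: real and M :: nat and \<alpha>1 \<alpha>2 :: real and \<beta> :: real
  assumes "a > 0" and "b > 0" and "M \<ge> 1"
    and "\<alpha>1 > 0" and "\<alpha>2 > 0"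
    and "\<beta> \<in> {0, 1}"
  shows "\<forall>\<kappa>>0. \<exists>\<alpha>3>0. \<exists>n0::nat. \<forall>n::nat. n \<ge> n0 \<longrightarrow>
    (let K = \<lfloor>\<alpha>3 * ln (real n)\<rfloor> in
     \<forall>u ku. mf_solution a b M u \<and> (\<forall>x. 0 \<le> u 0 x \<and> u 0 x \<le> 1) \<and>
            restr_solution a b M K \<beta> ku \<and> (\<forall>x. \<bar>x\<bar> \<le> K \<longrightarrow> ku 0 x = u 0 x) \<longrightarrow>
       (\<forall>x t. real_of_int \<bar>x\<bar> \<le> \<alpha>2 * ln (real n) \<and> 0 \<le> t \<and> t \<le> \<alpha>1 * ln (real n) \<longrightarrow>
          \<bar>ku t x - u t x\<bar> \<le> real n powr (- \<kappa>)))"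
proof (intro allI impI)
  fix \<kappa> :: real assume \<kappa>: "\<kappa> > 0"
  define C where "C = 3*a + b + 1 + 2*b*exp (real M) + 1"
  have C0: "C > 0" using assms unfolding C_def by (simp add: add_pos_nonneg)
  define \<alpha>3 where "\<alpha>3 = \<kappa> + \<alpha>2 + C * \<alpha>1"
  have a3: "\<alpha>3 > 0" unfolding \<alpha>3_def using \<kappa> assms C0 by (simp add: add_pos_pos)
  show "\<exists>\<alpha>3>0. \<exists>n0::nat. \<forall>n::nat. n \<ge> n0 \<longrightarrow>
    (let K = \<lfloor>\<alpha>3 * ln (real n)\<rfloor> in
     \<forall>u ku. mf_solution a b M u \<and> (\<forall>x. 0 \<le> u 0 x \<and> u 0 x \<le> 1) \<and>
            restr_solution a b M K \<beta> ku \<and> (\<forall>x. \<bar>x\<bar> \<le> K \<longrightarrow> ku 0 x = u 0 x) \<longrightarrow>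
       (\<forall>x t. real_of_int \<bar>x\<bar> \<le> \<alpha>2 * ln (real n) \<and> 0 \<le> t \<and> t \<le> \<alpha>1 * ln (real n) \<longrightarrow>
          \<bar>ku t x - u t x\<bar> \<le> real n powr (- \<kappa>)))"
  proof (intro exI[of _ \<alpha>3] conjI a3 exI[of _ "1::nat"] allI impI)
    fix n :: nat assume n: "n \<ge> 1"
    define K where "K = \<lfloor>\<alpha>3 * ln (real n)\<rfloor>"
    have ln0: "ln (real n) \<ge> 0" using n by simp
    have npos: "real n > 0" using n by simp
    show "let K = \<lfloor>\<alpha>3 * ln (real n)\<rfloor> in
     \<forall>u ku. mf_solution a b M u \<and> (\<forall>x. 0 \<le> u 0 x \<and> u 0 x \<le> 1) \<and>
            restr_solution a b M K \<beta> ku \<and> (\<forall>x. \<bar>x\<bar> \<le> K \<longrightarrow> ku 0 x = u 0 x) \<longrightarrow>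
       (\<forall>x t. real_of_int \<bar>x\<bar> \<le> \<alpha>2 * ln (real n) \<and> 0 \<le> t \<and> t \<le> \<alpha>1 * ln (real n) \<longrightarrow>
          \<bar>ku t x - u t x\<bar> \<le> real n powr (- \<kappa>))"
      unfolding Let_def K_def[symmetric]
    proof (intro allI impI, elim conjE)
      fix u ku x t
      assume sol: "mf_solution a b M u" and i: "\<forall>x. 0 \<le> u 0 x \<and> u 0 x \<le> 1"
        and ks: "restr_solution a b M K \<beta> ku" and ki: "\<forall>x. \<bar>x\<bar> \<le> K \<longrightarrow> ku 0 x = u 0 x"
        and xb: "real_of_int \<bar>x\<bar> \<le> \<alpha>2 * ln (real n)" and t0: "0 \<le> t" and tb: "t \<le> \<alpha>1 * ln (real n)"
      have "\<alpha>2 * ln (real n) \<le> \<alpha>3 * ln (real n)"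
        unfolding \<alpha>3_def using ln0 \<kappa> C0 assms(4) by (intro mult_right_mono) (auto simp: add_nonneg_nonneg)
      hence "real_of_int \<bar>x\<bar> \<le> \<alpha>3 * ln (real n)" using xb by linarith
      hence xK: "\<bar>x\<bar> \<le> K" unfolding K_def by (simp add: le_floor_iff)
      have lt: "\<bar>ku t x - u t x\<bar> < exp (C*t - real_of_int (K + 1 - \<bar>x\<bar>))"
        using compare[OF assms(1,2,3,6) sol i ks ki C_def] t0 xK by blast
      have Kb: "\<alpha>3 * ln (real n) < real_of_int K + 1" unfolding K_def by linarith
      have "C * t \<le> C * (\<alpha>1 * ln (real n))" using C0 tb by simp
      hence "C*t - real_of_int (K + 1 - \<bar>x\<bar>) \<le> - \<kappa> * ln (real n)"
        using Kb xb unfolding \<alpha>3_def by (simp add: algebra_simps)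
      hence "exp (C*t - real_of_int (K + 1 - \<bar>x\<bar>)) \<le> exp (- \<kappa> * ln (real n))" by simp
      also have "\<dots> = real n powr (- \<kappa>)" using npos by (simp add: powr_def)
      finally show "\<bar>ku t x - u t x\<bar> \<le> real n powr (- \<kappa>)" using lt by linarith
    qed
  qed
qed

end
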